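(* Let $d>2$ and $k$ be positive integers and let $p$ be the smallest positive integer such that $k<\kappa_p$. Assume $d$ divides $p$. If (i) $k-\kappa_{p-1}\neq p/d$ and (ii) $\kappa_p-k\neq p/d$, then there exists a subset $\mathcal{X}$ of $\mathbb{P}^d_\circ$ with $\kappa(\mathcal{X})\le k$ and $|\mathcal{X}|=\lfloor\lambda(d,k)\rfloor$. Otherwise, there exists a subset $\mathcal{X}$ of $\mathbb{P}^d_\circ$ with $\kappa(\mathcal{X})\le k$ and $|\mathcal{X}|=\lfloor\lambda(d,k)\rfloor-1$.
   Context: A point of $\mathbb{Z}^d$ is primitive if its coordinates are relatively prime; $\mathbb{P}^d_\circ$ denotes the set of primitive points of $\mathbb{Z}^d$ whose first non-zero coordinate is positive. For a finite $\mathcal{X}\subset\mathbb{R}^d$, $\kappa(\mathcal{X})=\max_{1\le i\le d}\sum_{x\in\mathcal{X}}|x_i|$. $B(d,p)=\{x\in\mathbb{R}^d:\|x\|_1\le p\}$; $N_p=|B(d,p)\cap\mathbb{P}^d_\circ|$ and $\kappa_p=\kappa(B(d,p)\cap\mathbb{P}^d_\circ)$ (with $N_0=\kappa_0=0$). With $p$ as in the claim, $\lambda(d,k)=N_{p-1}+\frac{d(k-\kappa_{p-1})}{p}$. *)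

theory Defs
  imports Main "HOL-Library.Library" Complex_Main
begin

text \<open>Points of Z^d are represented as functions nat => int vanishing outside {..<d}.\<close>

definition prim_pts :: "nat \<Rightarrow> (nat \<Rightarrow> int) set" where
  "prim_pts d = {x. (\<forall>i\<ge>d. x i = 0) \<and> Gcd (x ` {..<d}) = 1 \<and>
                    (\<exists>j<d. 0 < x j \<and> (\<forall>i<j. x i = 0))}"

definition kappa :: "nat \<Rightarrow> (nat \<Rightarrow> int) set \<Rightarrow> int" where
  "kappa d X = (MAX i\<in>{..<d}. \<Sum>x\<in>X. \<bar>x i\<bar>)"

definition l1norm :: "nat \<Rightarrow> (nat \<Rightarrow> int) \<Rightarrow> int" where
  "l1norm d x = (\<Sum>i<d. \<bar>x i\<bar>)"

definition ball_prim :: "nat \<Rightarrow> nat \<Rightarrow> (nat \<Rightarrow> int) set" where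
  "ball_prim d p = {x \<in> prim_pts d. l1norm d x \<le> int p}"

definition N_p :: "nat \<Rightarrow> nat \<Rightarrow> nat" where
  "N_p d p = card (ball_prim d p)"

definition kappa_p :: "nat \<Rightarrow> nat \<Rightarrow> int" where
  "kappa_p d p = kappa d (ball_prim d p)"

definition lam :: "nat \<Rightarrow> nat \<Rightarrow> nat \<Rightarrow> real" where
  "lam d k p = real (N_p d (p - 1)) + real d * (real k - real_of_int (kappa_p d (p - 1))) / real p"

end

theory Submission
  imports Defs
begin


definition sh :: "nat \<Rightarrow> (nat \<Rightarrow> int) \<Rightarrow> (nat \<Rightarrow> int)" where
  "sh d x = (\<lambda>i. if i < d then x ((i + d - 1) mod d) else 0)"

definition sgnok :: "nat \<Rightarrow> (nat \<Rightarrow> int) \<Rightarrow> bool" where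
  "sgnok d x = (\<exists>j<d. 0 < x j \<and> (\<forall>i<j. x i = 0))"

definition nrm :: "nat \<Rightarrow> (nat \<Rightarrow> int) \<Rightarrow> (nat \<Rightarrow> int)" where
  "nrm d x = (if sgnok d x then x else - x)"

definition ff :: "nat \<Rightarrow> (nat \<Rightarrow> int) \<Rightarrow> (nat \<Rightarrow> int)" where
  "ff d x = nrm d (sh d x)"

lemma shift_img:
  assumes "(d::nat) > 0"
  shows "(\<lambda>i. (i + d - 1) mod d) ` {..<d} = {..<d}"
proof -
    have "(\<lambda>i. (i + d - 1) mod d) ` {..<d} \<subseteq> {..<d}" using assms by auto
    moreover have "{..<d} \<subseteq> (\<lambda>i. (i + d - 1) mod d) ` {..<d}"
    proof
      fix j assume j: "j \<in> {..<d}"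
      have "((j + 1) mod d + d - 1) mod d = j"
      proof -
        have "((j + 1) mod d + d - 1) mod d = ((j+1) mod d + (d - 1)) mod d" using assms by simp
        also have "\<dots> = (j + 1 + (d - 1)) mod d" by (simp add: mod_add_left_eq)
        also have "\<dots> = (j + d) mod d" using assms by simp
        also have "\<dots> = j" using j by simp
        finally show ?thesis .
      qed
      moreover have "(j+1) mod d \<in> {..<d}" using assms by simp
      ultimately show "j \<in> (\<lambda>i. (i + d - 1) mod d) ` {..<d}" by (rule image_eqI[OF sym])
    qed
    ultimately show ?thesis by blast
qed

lemma shift_inj:
  assumes "(d::nat) > 0"
  shows "inj_on (\<lambda>i. (i + d - 1) mod d) {..<d}"
  using eq_card_imp_inj_on[of "{..<d}" "(\<lambda>i. (i + d - 1) mod d)"] shift_img[OF assms] by simp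

lemma sum_shift:
  fixes g :: "nat \<Rightarrow> 'b::comm_monoid_add"
  assumes "d > 0"
  shows "(\<Sum>i<d. g ((i + d - 1) mod d)) = (\<Sum>i<d. g i)"
proof -
  have "(\<Sum>i<d. g ((i + d - 1) mod d)) = (\<Sum>i\<in>(\<lambda>i. (i + d - 1) mod d) ` {..<d}. g i)"
    using sum.reindex[OF shift_inj[OF assms], of g] by simp
  also have "\<dots> = (\<Sum>i<d. g i)" by (simp only: shift_img[OF assms])
  finally show ?thesis .
qed

lemma prim_nz: "x \<in> prim_pts d \<Longrightarrow> \<exists>j<d. x j \<noteq> 0"
  unfolding prim_pts_def by force

lemma sgnok_neg:
  assumes "\<exists>j<d. y j \<noteq> 0" "\<not> sgnok d y"
  shows "sgnok d (- y)"
proof -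
  define j where "j = (LEAST j. y j \<noteq> 0)"
  obtain j0 where j0: "j0 < d" "y j0 \<noteq> 0" using assms by blast
  have yj: "y j \<noteq> 0" unfolding j_def by (rule LeastI[of _ j0]) (use j0 in auto)
  have jle: "j \<le> j0" unfolding j_def by (rule Least_le) (use j0 in auto)
  have below: "\<forall>i<j. y i = 0" unfolding j_def using not_less_Least by blast
  have "j < d" using jle j0 by simp
  hence "y j < 0" using assms(2) yj below unfolding sgnok_def by force
  thus ?thesis unfolding sgnok_def using \<open>j < d\<close> below by (intro exI[of _ j]) auto
qed

lemma sgnok_nrm: "\<exists>j<d. y j \<noteq> 0 \<Longrightarrow> sgnok d (nrm d y)"
  unfolding nrm_def using sgnok_neg by auto

lemma nrm_cases: "nrm d y = y \<or> nrm d y = - y"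
  unfolding nrm_def by auto

lemma abs_nrm: "\<bar>nrm d y i\<bar> = \<bar>y i\<bar>"
  using nrm_cases[of d y] by (metis abs_minus_cancel uminus_apply)

lemma abs_ff: "i < d \<Longrightarrow> \<bar>ff d x i\<bar> = \<bar>x ((i + d - 1) mod d)\<bar>"
  unfolding ff_def by (simp add: abs_nrm sh_def)

lemma ff_out: "d \<le> i \<Longrightarrow> ff d x i = 0"
  unfolding ff_def using nrm_cases[of d "sh d x"] by (auto simp: sh_def)

lemma l1norm_ff: assumes d: "d > 0" shows "l1norm d (ff d x) = l1norm d x"
proof -
  have "(\<Sum>i<d. \<bar>ff d x i\<bar>) = (\<Sum>i<d. \<bar>x ((i + d - 1) mod d)\<bar>)"
    by (rule sum.cong) (simp_all add: abs_ff)
  also have "\<dots> = (\<Sum>i<d. \<bar>x i\<bar>)" by (rule sum_shift[OF d])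
  finally show ?thesis unfolding l1norm_def .
qed

lemma sh_img: "d > 0 \<Longrightarrow> sh d x ` {..<d} = x ` {..<d}"
proof -
  assume d: "d > 0"
  have "sh d x ` {..<d} = x ` ((\<lambda>i. (i + d - 1) mod d) ` {..<d})"
    unfolding sh_def by (auto simp: image_iff)
  thus ?thesis by (simp only: shift_img[OF d])
qed

lemma ff_prim:
  assumes d: "d > 0" and x: "x \<in> prim_pts d"
  shows "ff d x \<in> prim_pts d"
proof -
  have g: "Gcd (x ` {..<d}) = 1" using x unfolding prim_pts_def by auto
  have g2: "Gcd (ff d x ` {..<d}) = 1"
  proof (cases "ff d x = sh d x")
    case True thus ?thesis using g sh_img[OF d] by simp
  next
    case False
    hence "ff d x = - sh d x" unfolding ff_def using nrm_cases by metis
    hence "ff d x ` {..<d} = uminus ` (sh d x ` {..<d})" by auto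
    thus ?thesis using g sh_img[OF d] by simp
  qed
  obtain j where j: "j < d" "x j \<noteq> 0" using prim_nz[OF x] by blast
  have "\<exists>i<d. sh d x i \<noteq> 0"
  proof -
    have "x ` {..<d} = sh d x ` {..<d}" using sh_img[OF d] by simp
    then obtain i where "i < d" "sh d x i = x j" using j by (metis imageE image_eqI lessThan_iff)
    thus ?thesis using j by auto
  qed
  hence "sgnok d (ff d x)" unfolding ff_def by (rule sgnok_nrm)
  thus ?thesis using g2 ff_out unfolding prim_pts_def sgnok_def by auto
qed



lemma sh_pow:
  assumes d: "d > 0" and s: "\<forall>i\<ge>d. x i = 0"
  shows "(sh d ^^ j) x = (\<lambda>i. if i < d then x ((i + j * (d - 1)) mod d) else 0)"
proof (induction j)
  case 0
  show ?case using s by (auto simp: fun_eq_iff)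
next
  case (Suc j)
  show ?case
  proof (rule ext)
    fix i
    show "(sh d ^^ Suc j) x i = (if i < d then x ((i + Suc j * (d - 1)) mod d) else 0)"
    proof (cases "i < d")
      case True
      have "(sh d ^^ Suc j) x i = (sh d ^^ j) x ((i + d - 1) mod d)"
        using True by (simp add: sh_def)
      also have "\<dots> = x (((i + d - 1) mod d + j * (d - 1)) mod d)"
        using Suc d by simp
      also have "((i + d - 1) mod d + j * (d - 1)) mod d = (i + (d - 1) + j * (d - 1)) mod d"
        using d by (simp add: mod_add_left_eq)
      also have "i + (d - 1) + j * (d - 1) = i + Suc j * (d - 1)" by simp
      finally show ?thesis using True by simp
    next
      case False thus ?thesis by (simp add: sh_def)
    qed
  qed
qed

lemma sh_pow_d:
  assumes d: "d > 0" and s: "\<forall>i\<ge>d. x i = 0"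
  shows "(sh d ^^ d) x = x"
proof -
  have "\<And>i. i < d \<Longrightarrow> (i + d * (d - 1)) mod d = i" by simp
  thus ?thesis using sh_pow[OF d s, of d] s by (auto simp: fun_eq_iff)
qed

lemma sh_neg: "sh d (- y) = - sh d y"
  by (auto simp: sh_def fun_eq_iff)

lemma ff_pow_pm: "(ff d ^^ j) x = (sh d ^^ j) x \<or> (ff d ^^ j) x = - (sh d ^^ j) x"
proof (induction j)
  case 0 thus ?case by simp
next
  case (Suc j)
  define y where "y = (sh d ^^ j) x"
  have e1: "(ff d ^^ Suc j) x = nrm d (sh d ((ff d ^^ j) x))" by (simp add: ff_def)
  have e2: "(sh d ^^ Suc j) x = sh d y" by (simp add: y_def)
  show ?case
  proof (cases "(ff d ^^ j) x = y")
    case True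
    hence "(ff d ^^ Suc j) x = nrm d (sh d y)" using e1 by simp
    thus ?thesis using e2 nrm_cases[of d "sh d y"] by metis
  next
    case False
    hence "(ff d ^^ j) x = - y" using Suc.IH unfolding y_def by blast
    hence "(ff d ^^ Suc j) x = nrm d (- sh d y)" using e1 sh_neg by simp
    thus ?thesis using e2 nrm_cases[of d "- sh d y"] by (metis minus_minus)
  qed
qed

lemma ff_pow_prim: "d > 0 \<Longrightarrow> x \<in> prim_pts d \<Longrightarrow> (ff d ^^ j) x \<in> prim_pts d"
  by (induction j) (auto intro: ff_prim)

lemma sgnok_not_both: assumes "sgnok d x" "sgnok d (- x)" shows False
proof -
  obtain j where j: "j < d" "0 < x j" "\<forall>i<j. x i = 0" using assms(1) unfolding sgnok_def by blast
  obtain k where k: "k < d" "0 < - x k" "\<forall>i<k. - x i = 0" using assms(2) unfolding sgnok_def by auto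
  show False
  proof (cases j k rule: linorder_cases)
    case less thus ?thesis using j k by force
  next
    case equal thus ?thesis using j k by force
  next
    case greater thus ?thesis using j k by force
  qed
qed

lemma ff_pow_d:
  assumes d: "d > 0" and x: "x \<in> prim_pts d"
  shows "(ff d ^^ d) x = x"
proof -
  have s: "\<forall>i\<ge>d. x i = 0" using x unfolding prim_pts_def by auto
  have o: "sgnok d x" using x unfolding prim_pts_def sgnok_def by auto
  have "sgnok d ((ff d ^^ d) x)" using ff_pow_prim[OF d x, of d] unfolding prim_pts_def sgnok_def by auto
  moreover have "(ff d ^^ d) x = x \<or> (ff d ^^ d) x = - x" using ff_pow_pm[of d d x] sh_pow_d[OF d s] by simp
  ultimately show ?thesis using o sgnok_not_both by metis
qed

lemma ff_inj: assumes d: "d > 0" shows "inj_on (ff d) (prim_pts d)"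
proof (rule inj_onI)
  fix x y assume x: "x \<in> prim_pts d" and y: "y \<in> prim_pts d" and e: "ff d x = ff d y"
  have fd: "ff d ^^ d = (ff d ^^ (d - 1)) \<circ> ff d"
    using d funpow_Suc_right[of "d - 1" "ff d"] by simp
  have "(ff d ^^ d) x = (ff d ^^ (d - 1)) (ff d x)" using fd by simp
  moreover have "(ff d ^^ d) y = (ff d ^^ (d - 1)) (ff d y)" using fd by simp
  ultimately show "x = y" using ff_pow_d[OF d x] ff_pow_d[OF d y] e by simp
qed



definition Sp :: "nat \<Rightarrow> nat \<Rightarrow> (nat \<Rightarrow> int) set" where
  "Sp d p = {x \<in> prim_pts d. l1norm d x = int p}"

lemma ff_Sp: "d > 0 \<Longrightarrow> x \<in> Sp d p \<Longrightarrow> ff d x \<in> Sp d p"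
  unfolding Sp_def using ff_prim l1norm_ff by auto

lemma inv_bal:
  assumes d: "d > 0" and fin: "finite A" and sub: "A \<subseteq> Sp d p" and inv: "ff d ` A \<subseteq> A"
    and i: "i < d"
  shows "int d * (\<Sum>y\<in>A. \<bar>y i\<bar>) = int (card A) * int p"
proof -
  define c where "c i = (\<Sum>y\<in>A. \<bar>y i\<bar>)" for i
  have injA: "inj_on (ff d) A" using inj_on_subset[OF ff_inj[OF d], of A] sub unfolding Sp_def by auto
  have imA: "ff d ` A = A" by (rule endo_inj_surj[OF fin inv injA])
  have step: "c j = c ((j + d - 1) mod d)" if j: "j < d" for j
  proof -
    have "c j = (\<Sum>y\<in>ff d ` A. \<bar>y j\<bar>)" unfolding c_def using imA by simp
    also have "\<dots> = (\<Sum>y\<in>A. \<bar>ff d y j\<bar>)" using sum.reindex[OF injA, of "\<lambda>y. \<bar>y j\<bar>"] by simp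
    also have "\<dots> = (\<Sum>y\<in>A. \<bar>y ((j + d - 1) mod d)\<bar>)" using abs_ff[OF j] by simp
    finally show ?thesis unfolding c_def .
  qed
  have const: "j < d \<Longrightarrow> c j = c 0" for j
  proof (induction j)
    case 0 thus ?case by simp
  next
    case (Suc j)
    have "c (Suc j) = c ((Suc j + d - 1) mod d)" using step[OF Suc.prems] .
    also have "(Suc j + d - 1) mod d = j" using Suc.prems by simp
    finally show ?case using Suc by simp
  qed
  have "(\<Sum>j<d. c j) = (\<Sum>y\<in>A. l1norm d y)" unfolding c_def l1norm_def by (rule sum.swap)
  also have "\<dots> = (\<Sum>y\<in>A. int p)" using sub unfolding Sp_def by (intro sum.cong) auto
  also have "\<dots> = int (card A) * int p" by simp
  finally have "(\<Sum>j<d. c j) = int (card A) * int p" .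
  moreover have "(\<Sum>j<d. c j) = (\<Sum>j<d. c 0)" by (rule sum.cong) (auto intro: const)
  ultimately have "int d * c 0 = int (card A) * int p" by simp
  thus ?thesis using const[OF i] unfolding c_def by metis
qed



definition DD :: "nat \<Rightarrow> (nat \<Rightarrow> int) set" where
  "DD d = {\<delta>. (\<forall>i\<ge>d. \<delta> i = 0) \<and> (\<forall>i<d. \<delta> i \<in> {-1,0,1}) \<and> (\<Sum>i<d. \<delta> i) = 0
              \<and> (\<exists>i<d. \<delta> i \<noteq> 0) \<and> (\<exists>i<d. \<delta> i = 0)}"

definition Pt :: "nat \<Rightarrow> nat \<Rightarrow> (nat \<Rightarrow> int) \<Rightarrow> (nat \<Rightarrow> int)" where
  "Pt d q \<delta> = (\<lambda>i. if i < d then int q + \<delta> i else 0)"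

lemma DD_finite: "finite (DD d)"
proof -
  have "DD d \<subseteq> {f. \<forall>x. (x \<in> {..<d} \<longrightarrow> f x \<in> {-1,0,1}) \<and> (x \<notin> {..<d} \<longrightarrow> f x = 0)}"
    unfolding DD_def by auto
  moreover have "finite {f. \<forall>x. (x \<in> {..<d} \<longrightarrow> f x \<in> {-1,0,1::int}) \<and> (x \<notin> {..<d} \<longrightarrow> f x = 0)}"
    by (rule finite_set_of_finite_funs) auto
  ultimately show ?thesis by (rule finite_subset)
qed

lemma DD_neg: "\<delta> \<in> DD d \<Longrightarrow> - \<delta> \<in> DD d"
  unfolding DD_def by (auto simp: sum_negf)

lemma DD_range: "i < d \<Longrightarrow> \<delta> \<in> DD d \<Longrightarrow> \<delta> i \<in> {-1,0,1}"
  unfolding DD_def by blast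

lemma DD_sh: assumes d: "d > 0" and x: "\<delta> \<in> DD d" shows "sh d \<delta> \<in> DD d"
proof -
  have img: "sh d \<delta> ` {..<d} = \<delta> ` {..<d}" by (rule sh_img[OF d])
  have s: "(\<Sum>i<d. sh d \<delta> i) = 0"
  proof -
    have "(\<Sum>i<d. sh d \<delta> i) = (\<Sum>i<d. \<delta> ((i + d - 1) mod d))" by (rule sum.cong) (auto simp: sh_def)
    also have "\<dots> = (\<Sum>i<d. \<delta> i)" by (rule sum_shift[OF d])
    also have "\<dots> = 0" using x unfolding DD_def by blast
    finally show ?thesis .
  qed
  have a: "\<forall>i<d. sh d \<delta> i \<in> {-1,0,1}"
  proof (intro allI impI)
    fix i assume i: "i < d"
    have "(i + d - 1) mod d < d" using d by simp
    hence "\<delta> ((i + d - 1) mod d) \<in> {-1,0,1}" using x by (rule DD_range)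
    thus "sh d \<delta> i \<in> {-1,0,1}" using i by (simp add: sh_def)
  qed
  have b: "\<exists>i<d. sh d \<delta> i \<noteq> 0"
  proof -
    obtain j where j: "j < d" "\<delta> j \<noteq> 0" using x unfolding DD_def by blast
    hence "\<delta> j \<in> sh d \<delta> ` {..<d}" using img by simp
    then obtain i where "i < d" "sh d \<delta> i = \<delta> j" by auto
    thus ?thesis using j by auto
  qed
  have c: "\<exists>i<d. sh d \<delta> i = 0"
  proof -
    obtain j where j: "j < d" "\<delta> j = 0" using x unfolding DD_def by blast
    hence "\<delta> j \<in> sh d \<delta> ` {..<d}" using img by simp
    then obtain i where "i < d" "sh d \<delta> i = \<delta> j" by auto
    thus ?thesis using j by auto
  qed
  have sup: "\<forall>i\<ge>d. sh d \<delta> i = 0" by (simp add: sh_def)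
  show ?thesis unfolding DD_def using sup a s b c by blast
qed

lemma nonneg_sgnok: assumes "\<forall>i<d. 0 \<le> x i" "\<exists>j<d. x j \<noteq> 0" shows "sgnok d x"
proof (rule ccontr)
  assume "\<not> sgnok d x"
  hence "sgnok d (- x)" using sgnok_neg assms(2) by blast
  then obtain j where "j < d" "0 < - x j" unfolding sgnok_def by auto
  thus False using assms(1) by force
qed

lemma DD_has_one: assumes x: "\<delta> \<in> DD d" shows "\<exists>i<d. \<delta> i = 1"
proof (rule ccontr)
  assume na: "\<not> (\<exists>i<d. \<delta> i = 1)"
  have le: "\<forall>i<d. \<delta> i \<le> 0"
  proof (intro allI impI)
    fix i assume i: "i < d"
    have "\<delta> i \<in> {-1,0,1}" by (rule DD_range[OF i x])
    moreover have "\<delta> i \<noteq> 1" using i na by blast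
    ultimately show "\<delta> i \<le> 0" by auto
  qed
  have "(\<Sum>i<d. - \<delta> i) = 0" using x unfolding DD_def by (simp add: sum_negf)
  hence "\<forall>i\<in>{..<d}. - \<delta> i = 0" using le by (subst (asm) sum_nonneg_eq_0_iff) auto
  moreover obtain j where "j < d" "\<delta> j \<noteq> 0" using x unfolding DD_def by blast
  ultimately show False by auto
qed

lemma abs_Pt: assumes "i < d" "\<delta> \<in> DD d" "q \<ge> 1" shows "\<bar>Pt d q \<delta> i\<bar> = int q + \<delta> i"
proof -
  have "\<delta> i \<in> {-1,0,1}" by (rule DD_range[OF assms(1,2)])
  hence "0 \<le> int q + \<delta> i" using assms(3) by auto
  thus ?thesis using assms(1) by (simp add: Pt_def)
qed

lemma Pt_nonneg: assumes "\<delta> \<in> DD d" "q \<ge> 1" shows "\<forall>i<d. 0 \<le> Pt d q \<delta> i"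
proof (intro allI impI)
  fix i assume i: "i < d"
  have "\<delta> i \<in> {-1,0,1}" by (rule DD_range[OF i assms(1)])
  hence "0 \<le> int q + \<delta> i" using assms(2) by auto
  thus "0 \<le> Pt d q \<delta> i" using i by (simp add: Pt_def)
qed

lemma Pt_Sp:
  assumes d: "d > 0" and q: "q \<ge> 1" and x: "\<delta> \<in> DD d"
  shows "Pt d q \<delta> \<in> Sp d (d * q)"
proof -
  obtain a where a: "a < d" "\<delta> a = 1" using DD_has_one[OF x] by blast
  obtain b where b: "b < d" "\<delta> b = 0" using x unfolding DD_def by blast
  let ?G = "Gcd (Pt d q \<delta> ` {..<d})"
  have "Pt d q \<delta> a \<in> Pt d q \<delta> ` {..<d}" using a by simp
  hence "?G dvd Pt d q \<delta> a" by (rule Gcd_dvd)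
  moreover have "Pt d q \<delta> a = int q + 1" using a by (simp add: Pt_def)
  ultimately have "?G dvd int q + 1" by simp
  have "Pt d q \<delta> b \<in> Pt d q \<delta> ` {..<d}" using b by simp
  hence "?G dvd Pt d q \<delta> b" by (rule Gcd_dvd)
  moreover have "Pt d q \<delta> b = int q" using b by (simp add: Pt_def)
  ultimately have "?G dvd int q" by simp
  moreover note \<open>?G dvd int q + 1\<close>
  ultimately have "?G dvd 1" by (metis add_diff_cancel_left' dvd_diff)
  hence g: "?G = 1" using Gcd_int_greater_eq_0 by (simp add: zdvd1_eq)
  have nn: "\<forall>i<d. 0 \<le> Pt d q \<delta> i" using Pt_nonneg[OF x q] .
  have nz: "\<exists>j<d. Pt d q \<delta> j \<noteq> 0" using a by (intro exI[of _ a]) (simp add: Pt_def)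
  have sg: "sgnok d (Pt d q \<delta>)" by (rule nonneg_sgnok[OF nn nz])
  have "l1norm d (Pt d q \<delta>) = (\<Sum>i<d. int q + \<delta> i)" unfolding l1norm_def
    by (rule sum.cong) (auto simp: abs_Pt[OF _ x q])
  also have "\<dots> = int d * int q + (\<Sum>i<d. \<delta> i)" by (simp add: sum.distrib)
  also have "(\<Sum>i<d. \<delta> i) = 0" using x unfolding DD_def by blast
  also have "int d * int q + 0 = int (d * q)" by simp
  finally have l: "l1norm d (Pt d q \<delta>) = int (d * q)" .
  have sup: "\<forall>i\<ge>d. Pt d q \<delta> i = 0" by (simp add: Pt_def)
  have "Pt d q \<delta> \<in> prim_pts d" unfolding prim_pts_def using sup g sg[unfolded sgnok_def] by blast
  thus ?thesis using l unfolding Sp_def by blast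
qed

lemma Pt_inj: "inj_on (Pt d q) (DD d)"
proof (rule inj_onI)
  fix x y assume "x \<in> DD d" "y \<in> DD d" "Pt d q x = Pt d q y"
  show "x = y"
  proof (rule ext)
    fix i
    show "x i = y i"
    proof (cases "i < d")
      case True
      have "Pt d q x i = Pt d q y i" using \<open>Pt d q x = Pt d q y\<close> by simp
      thus ?thesis using True by (simp add: Pt_def)
    next
      case False thus ?thesis using \<open>x \<in> DD d\<close> \<open>y \<in> DD d\<close> unfolding DD_def by simp
    qed
  qed
qed

lemma ff_Pt:
  assumes d: "d > 0" and q: "q \<ge> 1" and x: "\<delta> \<in> DD d"
  shows "ff d (Pt d q \<delta>) = Pt d q (sh d \<delta>)"
proof -
  have e: "sh d (Pt d q \<delta>) = Pt d q (sh d \<delta>)" unfolding sh_def Pt_def using d by (auto simp: fun_eq_iff)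
  have x2: "sh d \<delta> \<in> DD d" by (rule DD_sh[OF d x])
  obtain a where a: "a < d" "sh d \<delta> a = 1" using DD_has_one[OF x2] by blast
  have nn: "\<forall>i<d. 0 \<le> Pt d q (sh d \<delta>) i" using Pt_nonneg[OF x2 q] .
  have nz: "\<exists>j<d. Pt d q (sh d \<delta>) j \<noteq> 0" using a by (intro exI[of _ a]) (simp add: Pt_def)
  show ?thesis unfolding ff_def nrm_def e using nonneg_sgnok[OF nn nz] by simp
qed



definition evv :: "nat \<Rightarrow> nat \<Rightarrow> int" where
  "evv a = (\<lambda>i. if i = a then 1 else 0)"

definition posl :: "(nat \<Rightarrow> int) \<Rightarrow> bool" where
  "posl \<delta> = (0 < \<delta> (LEAST i. \<delta> i \<noteq> 0))"

lemma posl_neg: assumes "\<exists>i. \<delta> i \<noteq> 0" shows "posl (- \<delta>) = (\<not> posl \<delta>)"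
proof -
  have L: "(LEAST i. (- \<delta>) i \<noteq> 0) = (LEAST i. \<delta> i \<noteq> 0)" by simp
  have "\<delta> (LEAST i. \<delta> i \<noteq> 0) \<noteq> 0" using assms by (rule LeastI_ex)
  thus ?thesis unfolding posl_def L by auto
qed

lemma DD_nz: "\<delta> \<in> DD d \<Longrightarrow> \<exists>i. \<delta> i \<noteq> 0"
  unfolding DD_def by blast

lemma uminus_inj: "inj_on uminus (A :: (nat \<Rightarrow> int) set)"
  by (rule inj_onI) simp

lemma halves:
  assumes B: "B \<subseteq> DD d" and cl: "\<forall>\<delta>\<in>B. - \<delta> \<in> B"
  defines "H \<equiv> {\<delta>\<in>B. posl \<delta>}"
  shows "B = H \<union> uminus ` H" "H \<inter> uminus ` H = {}" "card B = 2 * card H"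
proof -
  show e: "B = H \<union> uminus ` H"
  proof
    show "B \<subseteq> H \<union> uminus ` H"
    proof
      fix x assume x: "x \<in> B"
      show "x \<in> H \<union> uminus ` H"
      proof (cases "posl x")
        case True thus ?thesis using x unfolding H_def by blast
      next
        case False
        hence "posl (- x)" using posl_neg[OF DD_nz] x B by blast
        hence "- x \<in> H" using x cl unfolding H_def by blast
        hence "- (- x) \<in> uminus ` H" by blast
        thus ?thesis by simp
      qed
    qed
    show "H \<union> uminus ` H \<subseteq> B" using cl unfolding H_def by auto
  qed
  show dj: "H \<inter> uminus ` H = {}"
  proof (rule ccontr)
    assume "H \<inter> uminus ` H \<noteq> {}"
    then obtain x y where "x \<in> H" "y \<in> H" "x = - y" by blast
    moreover have "posl (- y) = (\<not> posl y)" using posl_neg[OF DD_nz] \<open>y \<in> H\<close> B unfolding H_def by blast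
    ultimately show False unfolding H_def by blast
  qed
  have fB: "finite B" using B DD_finite finite_subset by blast
  have fH: "finite H" using fB unfolding H_def by simp
  have "card B = card H + card (uminus ` H)" using e dj fH card_Un_disjoint by (metis finite_imageI)
  also have "card (uminus ` H) = card H" using card_image[OF uminus_inj] by blast
  finally show "card B = 2 * card H" by simp
qed

lemma pair_set:
  fixes S :: "(nat \<Rightarrow> int) set"
  assumes f: "finite S" and dj: "S \<inter> uminus ` S = {}"
  shows "card (S \<union> uminus ` S) = 2 * card S" "(\<Sum>\<delta>\<in>S \<union> uminus ` S. \<delta> i) = 0"
proof -
  have c: "card (uminus ` S) = card S" using card_image[OF uminus_inj] by blast
  show "card (S \<union> uminus ` S) = 2 * card S" using card_Un_disjoint[OF f _ dj] f c by simp
  have e1: "(\<Sum>\<delta>\<in>S \<union> uminus ` S. \<delta> i) = (\<Sum>\<delta>\<in>S. \<delta> i) + (\<Sum>\<delta>\<in>uminus ` S. \<delta> i)"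
    using sum.union_disjoint[OF f _ dj] f by blast
  have e2: "(\<Sum>\<delta>\<in>uminus ` S. \<delta> i) = (\<Sum>\<delta>\<in>S. - \<delta> i)"
    using sum.reindex[OF uminus_inj, of "\<lambda>\<delta>. \<delta> i" S] by simp
  have e3: "(\<Sum>\<delta>\<in>S. \<delta> i) + (\<Sum>\<delta>\<in>S. - \<delta> i) = 0" by (simp add: sum_negf)
  show "(\<Sum>\<delta>\<in>S \<union> uminus ` S. \<delta> i) = 0" using e1 e2 e3 by linarith
qed

lemma evv_DD:
  assumes "a < d" "b < d" "a \<noteq> b" "c < d" "c \<noteq> a" "c \<noteq> b"
  shows "evv a - evv b \<in> DD d"
proof -
  have s: "(\<Sum>i<d. (evv a - evv b) i) = 0"
    using assms by (simp add: evv_def sum.distrib sum_subtractf)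
  have r: "\<forall>i<d. (evv a - evv b) i \<in> {-1,0,1}" by (simp add: evv_def)
  have sup: "\<forall>i\<ge>d. (evv a - evv b) i = 0" using assms by (simp add: evv_def)
  have nz: "\<exists>i<d. (evv a - evv b) i \<noteq> 0" using assms by (intro exI[of _ a]) (simp add: evv_def)
  have z: "\<exists>i<d. (evv a - evv b) i = 0" using assms by (intro exI[of _ c]) (simp add: evv_def)
  show ?thesis unfolding DD_def using s r sup nz z by blast
qed



lemma card_DD_ge: assumes d: "d \<ge> 3" shows "d + 3 \<le> card (DD d)"
proof -
  let ?A = "Sigma {..<d} (\<lambda>a. {..<d} - {a})"
  let ?f = "\<lambda>(a, b). evv a - evv b"
  have inj: "inj_on ?f ?A"
  proof (rule inj_onI)
    fix x y assume x: "x \<in> ?A" and y: "y \<in> ?A" and e: "?f x = ?f y"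
    obtain a b where ab: "x = (a, b)" by (cases x)
    obtain a' b' where ab': "y = (a', b')" by (cases y)
    have ne: "a \<noteq> b" "a' \<noteq> b'" using x y ab ab' by auto
    have e2: "evv a - evv b = evv a' - evv b'" using e ab ab' by simp
    have "(evv a - evv b) a = (evv a' - evv b') a" using e2 by simp
    hence "a = a'" using ne by (auto simp: evv_def split: if_splits)
    have "(evv a - evv b) b = (evv a' - evv b') b" using e2 by simp
    hence "b = b'" using ne by (auto simp: evv_def split: if_splits)
    thus "x = y" using ab ab' \<open>a = a'\<close> by simp
  qed
  have sub: "?f ` ?A \<subseteq> DD d"
  proof
    fix z assume "z \<in> ?f ` ?A"
    then obtain a b where ab: "a < d" "b < d" "a \<noteq> b" "z = evv a - evv b" by auto
    define c where "c = (if 0 \<noteq> a \<and> 0 \<noteq> b then 0 else if 1 \<noteq> a \<and> 1 \<noteq> b then 1 else (2::nat))"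
    have c: "c < d" "c \<noteq> a" "c \<noteq> b" using d ab unfolding c_def by auto
    show "z \<in> DD d" using evv_DD[OF ab(1,2,3) c] ab(4) by simp
  qed
  have "card ?A = (\<Sum>a<d. card ({..<d} - {a}))" by (rule card_SigmaI) auto
  also have "\<dots> = (\<Sum>a<d. d - 1)" by (rule sum.cong) auto
  also have "\<dots> = d * (d - 1)" by simp
  finally have "card ?A = d * (d - 1)" .
  hence "card (?f ` ?A) = d * (d - 1)" using card_image[OF inj] by simp
  hence "d * (d - 1) \<le> card (DD d)" using card_mono[OF DD_finite sub] by simp
  moreover have "3 * (d - 1) \<le> d * (d - 1)" using d by (intro mult_le_mono1) simp
  ultimately show ?thesis using d by linarith
qed



lemma zs_exists:
  assumes d: "d \<ge> 3" and m: "2 \<le> m" "m + 2 \<le> card (DD d)"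
  shows "\<exists>E \<subseteq> DD d. card E = m \<and> (\<forall>i. (\<Sum>\<delta>\<in>E. \<delta> i) = 0)"
proof -
  define H where "H = {\<delta> \<in> DD d. posl \<delta>}"
  have cl: "\<forall>\<delta>\<in>DD d. - \<delta> \<in> DD d" using DD_neg by blast
  have hD: "DD d = H \<union> uminus ` H" "H \<inter> uminus ` H = {}" "card (DD d) = 2 * card H"
    using halves[OF order_refl cl] unfolding H_def by auto
  have fH: "finite H" using DD_finite unfolding H_def by simp
  show ?thesis
  proof (cases "even m")
    case True
    then obtain j where j: "m = 2 * j" by blast
    have "j \<le> card H" using m hD(3) j by simp
    then obtain S where S: "S \<subseteq> H" "card S = j" "finite S" by (rule obtain_subset_with_card_n)
    have dj: "S \<inter> uminus ` S = {}" using S(1) hD(2) by blast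
    have "S \<union> uminus ` S \<subseteq> DD d" using S(1) hD(1) by blast
    thus ?thesis using pair_set[OF S(3) dj] S(2) j by blast
  next
    case False
    define j where "j = (m - 3) div 2"
    have j: "m = 2 * j + 3" using m False unfolding j_def by presburger
    define t1 where "t1 = evv 0 - evv 1"
    define t2 where "t2 = evv 1 - evv 2"
    define t3 where "t3 = evv 2 - evv 0"
    define T3 where "T3 = {t1, t2, t3}"
    define T6 where "T6 = T3 \<union> uminus ` T3"
    define H' where "H' = H - T6"
    have t1D: "t1 \<in> DD d" unfolding t1_def using d by (intro evv_DD[of _ _ _ 2]) auto
    have t2D: "t2 \<in> DD d" unfolding t2_def using d by (intro evv_DD[of _ _ _ 0]) auto
    have t3D: "t3 \<in> DD d" unfolding t3_def using d by (intro evv_DD[of _ _ _ 1]) auto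
    have v1: "t1 0 = 1" "t2 0 = 0" "t3 0 = -1" unfolding t1_def t2_def t3_def evv_def by auto
    have dist: "t1 \<noteq> t2" "t1 \<noteq> t3" "t2 \<noteq> t3" using v1 by auto
    have cT3: "card T3 = 3" unfolding T3_def using dist by simp
    have sT3: "(\<Sum>\<delta>\<in>T3. \<delta> i) = 0" for i
    proof -
      have "(\<Sum>\<delta>\<in>T3. \<delta> i) = t1 i + t2 i + t3 i" unfolding T3_def using dist by simp
      also have "\<dots> = 0" by (simp add: t1_def t2_def t3_def evv_def)
      finally show ?thesis .
    qed
    have "card (H \<inter> T6) \<le> 3"
    proof -
      let ?g = "\<lambda>\<delta>. if \<delta> \<in> T3 then \<delta> else - \<delta>"
      have "inj_on ?g (H \<inter> T6)"
      proof (rule inj_onI)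
        fix x y assume x: "x \<in> H \<inter> T6" and y: "y \<in> H \<inter> T6" and e: "?g x = ?g y"
        have "x = y \<or> x = - y" using e by (auto split: if_splits)
        moreover have "x \<noteq> - y" using x y hD(2) by blast
        ultimately show "x = y" by blast
      qed
      moreover have "?g ` (H \<inter> T6) \<subseteq> T3" unfolding T6_def by auto
      moreover have "finite T3" unfolding T3_def by simp
      ultimately have "card (H \<inter> T6) \<le> card T3" by (rule card_inj_on_le)
      thus ?thesis using cT3 by simp
    qed
    moreover have "card H' = card H - card (H \<inter> T6)"
      unfolding H'_def using fH by (simp add: card_Diff_subset_Int)
    moreover have "2 * j + 6 \<le> 2 * card H"
    proof -
      have "m + 2 \<le> 2 * card H" using m hD(3) by simp
      hence "2 * j + 5 \<le> 2 * card H" using j by simp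
      thus ?thesis by presburger
    qed
    ultimately have "j \<le> card H'" by linarith
    then obtain S where S: "S \<subseteq> H'" "card S = j" "finite S" by (rule obtain_subset_with_card_n)
    have dj: "S \<inter> uminus ` S = {}" using S(1) hD(2) unfolding H'_def by blast
    have dj2: "T3 \<inter> (S \<union> uminus ` S) = {}"
    proof -
      have "T3 \<inter> S = {}" using S(1) unfolding H'_def T6_def by blast
      moreover have "T3 \<inter> uminus ` S = {}"
      proof (rule ccontr)
        assume "T3 \<inter> uminus ` S \<noteq> {}"
        then obtain s where s: "s \<in> S" "- s \<in> T3" by blast
        hence "- (- s) \<in> uminus ` T3" by blast
        hence "s \<in> T6" unfolding T6_def by simp
        thus False using s S(1) unfolding H'_def by blast
      qed
      ultimately show ?thesis by blast
    qed
    define E where "E = T3 \<union> (S \<union> uminus ` S)"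
    have fT3: "finite T3" unfolding T3_def by simp
    have fS2: "finite (S \<union> uminus ` S)" using S(3) by simp
    have cE: "card E = m" unfolding E_def using card_Un_disjoint[OF fT3 fS2 dj2] pair_set(1)[OF S(3) dj] cT3 S(2) j
      by simp
    have sE: "(\<Sum>\<delta>\<in>E. \<delta> i) = 0" for i
      unfolding E_def using sum.union_disjoint[OF fT3 fS2 dj2, of "\<lambda>\<delta>. \<delta> i"] pair_set(2)[OF S(3) dj, of i] sT3[of i]
      by simp
    have "E \<subseteq> DD d" unfolding E_def T3_def using t1D t2D t3D S(1) hD(1) unfolding H'_def by blast
    thus ?thesis using cE sE by blast
  qed
qed



definition bal :: "nat \<Rightarrow> nat \<Rightarrow> (nat \<Rightarrow> int) set \<Rightarrow> bool" where
  "bal d q Y = (\<forall>i<d. (\<Sum>y\<in>Y. \<bar>y i\<bar>) = int (card Y) * int q)"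

lemma bal_union:
  assumes "finite Y1" "finite Y2" "Y1 \<inter> Y2 = {}" "bal d q Y1" "bal d q Y2"
  shows "bal d q (Y1 \<union> Y2)"
  using assms unfolding bal_def by (simp add: sum.union_disjoint card_Un_disjoint algebra_simps)

lemma Sp_finite: "finite (Sp d p)"
proof -
  have "Sp d p \<subseteq> {f. \<forall>x. (x \<in> {..<d} \<longrightarrow> f x \<in> {- int p..int p}) \<and> (x \<notin> {..<d} \<longrightarrow> f x = 0)}"
  proof
    fix x assume x: "x \<in> Sp d p"
    have "\<bar>x i\<bar> \<le> int p" if i: "i < d" for i
    proof -
      have "\<bar>x i\<bar> \<le> (\<Sum>j<d. \<bar>x j\<bar>)" using i by (intro member_le_sum) auto
      thus ?thesis using x unfolding Sp_def l1norm_def by simp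
    qed
    hence b: "x i \<in> {- int p..int p}" if "i < d" for i using that by (force simp: abs_le_iff)
    have "x i = 0" if "i \<ge> d" for i using x that unfolding Sp_def prim_pts_def by blast
    thus "x \<in> {f. \<forall>x. (x \<in> {..<d} \<longrightarrow> f x \<in> {- int p..int p}) \<and> (x \<notin> {..<d} \<longrightarrow> f x = 0)}"
      using b by auto
  qed
  moreover have "finite {f. \<forall>x. (x \<in> {..<d} \<longrightarrow> f x \<in> {- int p..int p}) \<and> (x \<notin> {..<d} \<longrightarrow> f x = (0::int))}"
    by (rule finite_set_of_finite_funs) auto
  ultimately show ?thesis by (rule finite_subset)
qed

lemma inv_bal2:
  assumes d: "d > 0" and fin: "finite A" and sub: "A \<subseteq> Sp d (d * q)" and inv: "ff d ` A \<subseteq> A"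
  shows "bal d q A"
  unfolding bal_def
proof (intro allI impI)
  fix i assume i: "i < d"
  have "int d * (\<Sum>y\<in>A. \<bar>y i\<bar>) = int (card A) * int (d * q)" by (rule inv_bal[OF d fin sub inv i])
  also have "\<dots> = int d * (int (card A) * int q)" by simp
  finally show "(\<Sum>y\<in>A. \<bar>y i\<bar>) = int (card A) * int q" using d by simp
qed

lemma funpow_inv: "f ` A \<subseteq> A \<Longrightarrow> x \<in> A \<Longrightarrow> (f ^^ n) x \<in> A"
  by (induction n) auto

lemma grow:
  assumes d: "d > 0"
    and RA: "R \<subseteq> A" and AS: "A \<subseteq> Sp d (d * q)" and invA: "ff d ` A \<subseteq> A" and invR: "ff d ` R \<subseteq> R"
    and cR: "d + 3 \<le> card R"
    and baseR: "\<And>m. 2 \<le> m \<Longrightarrow> m + 2 \<le> card R \<Longrightarrow> \<exists>Y\<subseteq>R. card Y = m \<and> bal d q Y"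
    and m: "2 \<le> m" "m + 2 \<le> card A"
  shows "\<exists>Y\<subseteq>A. card Y = m \<and> bal d q Y"
  using RA AS invA m
proof (induction "card (A - R)" arbitrary: A m rule: less_induct)
  case less
  have finA: "finite A" using less.prems(2) Sp_finite finite_subset by blast
  show ?case
  proof (cases "A = R")
    case True thus ?thesis using baseR less.prems by blast
  next
    case False
    then obtain x where x: "x \<in> A" "x \<notin> R" using less.prems(1) by blast
    have xp: "x \<in> prim_pts d" using x less.prems(2) unfolding Sp_def by blast
    define Ob where "Ob = (\<lambda>j. (ff d ^^ j) x) ` {..<d}"
    have OA: "Ob \<subseteq> A" unfolding Ob_def using funpow_inv[OF less.prems(3) x(1)] by blast
    have xO: "x \<in> Ob" unfolding Ob_def using d by (auto intro: image_eqI[of _ _ 0])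
    have invO: "ff d ` Ob \<subseteq> Ob"
    proof
      fix z assume "z \<in> ff d ` Ob"
      then obtain j where j: "j < d" "z = ff d ((ff d ^^ j) x)" unfolding Ob_def by auto
      hence z: "z = (ff d ^^ Suc j) x" by simp
      show "z \<in> Ob"
      proof (cases "Suc j < d")
        case True thus ?thesis unfolding Ob_def using z by blast
      next
        case False
        hence "Suc j = d" using j by simp
        hence "z = x" using z ff_pow_d[OF d xp] by simp
        thus ?thesis using xO by simp
      qed
    qed
    have OR: "Ob \<inter> R = {}"
    proof (rule ccontr)
      assume "Ob \<inter> R \<noteq> {}"
      then obtain j where j: "j < d" "(ff d ^^ j) x \<in> R" unfolding Ob_def by blast
      have "(ff d ^^ (d - j)) ((ff d ^^ j) x) \<in> R" by (rule funpow_inv[OF invR j(2)])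
      moreover have "(ff d ^^ (d - j)) ((ff d ^^ j) x) = (ff d ^^ d) x"
        using j(1) funpow_add[of "d - j" j "ff d"] by simp
      ultimately show False using ff_pow_d[OF d xp] x(2) by simp
    qed
    have finO: "finite Ob" unfolding Ob_def by simp
    have cO: "card Ob \<le> d" unfolding Ob_def using card_image_le[of "{..<d}"] by fastforce
    have balO: "bal d q Ob" by (rule inv_bal2[OF d finO _ invO]) (use OA less.prems(2) in blast)
    define A' where "A' = A - Ob"
    have injP: "inj_on (ff d) (prim_pts d)" by (rule ff_inj[OF d])
    have imO: "ff d ` Ob = Ob"
    proof (rule endo_inj_surj[OF finO invO])
      show "inj_on (ff d) Ob" using inj_on_subset[OF injP] OA less.prems(2) unfolding Sp_def by blast
    qed
    have invA': "ff d ` A' \<subseteq> A'"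
    proof
      fix z assume "z \<in> ff d ` A'"
      then obtain y where y: "y \<in> A'" "z = ff d y" by blast
      have yA: "y \<in> A" "y \<notin> Ob" using y unfolding A'_def by auto
      have "z \<in> A" using y yA less.prems(3) by blast
      moreover have "z \<notin> Ob"
      proof
        assume "z \<in> Ob"
        then obtain w where w: "w \<in> Ob" "ff d w = ff d y" using imO y(2) by (metis imageE)
        have "w \<in> prim_pts d" "y \<in> prim_pts d" using w(1) OA yA(1) less.prems(2) unfolding Sp_def by auto
        hence "w = y" using injP w(2) by (simp add: inj_on_def)
        thus False using w(1) yA(2) by simp
      qed
      ultimately show "z \<in> A'" unfolding A'_def by blast
    qed
    have RA': "R \<subseteq> A'" using less.prems(1) OR unfolding A'_def by blast
    have A'S: "A' \<subseteq> Sp d (d * q)" using less.prems(2) unfolding A'_def by blast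
    have finA': "finite A'" using finA unfolding A'_def by simp
    have lt: "card (A' - R) < card (A - R)"
    proof -
      have "A' - R \<subset> A - R" unfolding A'_def using xO x by blast
      thus ?thesis using finA by (intro psubset_card_mono) auto
    qed
    have cA: "card A = card A' + card Ob"
      unfolding A'_def using card_Diff_subset[OF finO OA] card_mono[OF finA OA] by simp
    have cRA': "card R \<le> card A'" using card_mono[OF finA' RA'] .
    show ?thesis
    proof (cases "m + 2 \<le> card A'")
      case True
      obtain Y where "Y \<subseteq> A'" "card Y = m" "bal d q Y"
        using less.hyps[OF lt RA' A'S invA' less.prems(4) True] by blast
      thus ?thesis unfolding A'_def by blast
    next
      case False
      define m' where "m' = m - card Ob"
      have m'1: "2 \<le> m'" using False cRA' cR cO unfolding m'_def by linarith
      have m'2: "m' + 2 \<le> card A'" using less.prems(5) cA m'1 unfolding m'_def by linarith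
      obtain Y where Y: "Y \<subseteq> A'" "card Y = m'" "bal d q Y"
        using less.hyps[OF lt RA' A'S invA' m'1 m'2] by blast
      have finY: "finite Y" using Y(1) finA' finite_subset by blast
      have dj: "Y \<inter> Ob = {}" using Y(1) unfolding A'_def by blast
      have "bal d q (Y \<union> Ob)" by (rule bal_union[OF finY finO dj Y(3) balO])
      moreover have "card (Y \<union> Ob) = m" using card_Un_disjoint[OF finY finO dj] Y(2) m'1 unfolding m'_def by simp
      moreover have "Y \<union> Ob \<subseteq> A" using Y(1) OA unfolding A'_def by blast
      ultimately show ?thesis by blast
    qed
  qed
qed



lemma setupR:
  assumes d: "d \<ge> 3" and q: "q \<ge> 1"
  shows "card (Sp d (d*q)) \<ge> d + 3"
    and "\<And>m. 2 \<le> m \<Longrightarrow> m + 2 \<le> card (Sp d (d*q)) \<Longrightarrow> \<exists>Y \<subseteq> Sp d (d*q). card Y = m \<and> bal d q Y"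
    and "bal d q (Sp d (d*q))"
proof -
  have d0: "d > 0" using d by simp
  let ?R = "Pt d q ` DD d"
  let ?S = "Sp d (d*q)"
  have RS: "?R \<subseteq> ?S" using Pt_Sp[OF d0 q] by blast
  have cR: "card ?R = card (DD d)" by (rule card_image[OF Pt_inj])
  have cR3: "d + 3 \<le> card ?R" using cR card_DD_ge[OF d] by simp
  show "card ?S \<ge> d + 3" using cR3 card_mono[OF Sp_finite RS] by simp
  have invS: "ff d ` ?S \<subseteq> ?S" using ff_Sp[OF d0] by blast
  have invR: "ff d ` ?R \<subseteq> ?R"
  proof
    fix z assume "z \<in> ff d ` ?R"
    then obtain \<delta> where x: "\<delta> \<in> DD d" "z = ff d (Pt d q \<delta>)" by blast
    hence "z = Pt d q (sh d \<delta>)" using ff_Pt[OF d0 q] by simp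
    thus "z \<in> ?R" using DD_sh[OF d0 x(1)] by blast
  qed
  have baseR: "\<exists>Y\<subseteq>?R. card Y = m \<and> bal d q Y" if m: "2 \<le> m" "m + 2 \<le> card ?R" for m
  proof -
    obtain E where E: "E \<subseteq> DD d" "card E = m" "\<forall>i. (\<Sum>\<delta>\<in>E. \<delta> i) = 0"
      using zs_exists[OF d m(1)] m(2) cR by auto
    have injE: "inj_on (Pt d q) E" using inj_on_subset[OF Pt_inj E(1)] .
    have fE: "finite E" using E(1) DD_finite finite_subset by blast
    have "card (Pt d q ` E) = m" using card_image[OF injE] E(2) by simp
    moreover have "bal d q (Pt d q ` E)"
      unfolding bal_def
    proof (intro allI impI)
      fix i assume i: "i < d"
      have "(\<Sum>y\<in>Pt d q ` E. \<bar>y i\<bar>) = (\<Sum>\<delta>\<in>E. \<bar>Pt d q \<delta> i\<bar>)"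
        using sum.reindex[OF injE, of "\<lambda>y. \<bar>y i\<bar>"] by simp
      also have "\<dots> = (\<Sum>\<delta>\<in>E. int q + \<delta> i)"
        by (rule sum.cong) (use abs_Pt[OF i _ q] E(1) in blast)+
      also have "\<dots> = int (card E) * int q + (\<Sum>\<delta>\<in>E. \<delta> i)" by (simp add: sum.distrib)
      also have "\<dots> = int (card E) * int q" using E(3) by simp
      finally show "(\<Sum>y\<in>Pt d q ` E. \<bar>y i\<bar>) = int (card (Pt d q ` E)) * int q"
        using card_image[OF injE] by simp
    qed
    moreover have "Pt d q ` E \<subseteq> ?R" using E(1) by blast
    ultimately show ?thesis by blast
  qed
  show "\<And>m. 2 \<le> m \<Longrightarrow> m + 2 \<le> card ?S \<Longrightarrow> \<exists>Y \<subseteq> ?S. card Y = m \<and> bal d q Y"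
    using grow[OF d0 RS order_refl invS invR cR3 baseR] by blast
  show "bal d q ?S" by (rule inv_bal2[OF d0 Sp_finite order_refl invS])
qed

lemma x0_props:
  assumes d: "d \<ge> 3" and q: "q \<ge> 1"
  shows "Pt d q (evv 0 - evv 1) \<in> Sp d (d*q)"
    and "\<And>i. i < d \<Longrightarrow> int q - 1 \<le> \<bar>Pt d q (evv 0 - evv 1) i\<bar> \<and> \<bar>Pt d q (evv 0 - evv 1) i\<bar> \<le> int q + 1"
proof -
  have t: "evv 0 - evv 1 \<in> DD d" using d by (intro evv_DD[of _ _ _ 2]) auto
  show "Pt d q (evv 0 - evv 1) \<in> Sp d (d*q)" using Pt_Sp[OF _ q t] d by simp
  fix i assume i: "i < d"
  have "\<bar>Pt d q (evv 0 - evv 1) i\<bar> = int q + (evv 0 - evv 1) i" by (rule abs_Pt[OF i t q])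
  moreover have "(evv 0 - evv 1) i \<in> {-1,0,1}" by (rule DD_range[OF i t])
  ultimately show "int q - 1 \<le> \<bar>Pt d q (evv 0 - evv 1) i\<bar> \<and> \<bar>Pt d q (evv 0 - evv 1) i\<bar> \<le> int q + 1"
    by auto
qed



lemma Y_ex:
  assumes d: "d \<ge> 3" and q: "q \<ge> 1" and r: "0 \<le> r"
    and c: "m' = 0 \<or> (2 \<le> m' \<and> m' + 2 \<le> card (Sp d (d*q)) \<and> int m' * int q \<le> r)
            \<or> (m' = 1 \<and> int q + 1 \<le> r)
            \<or> (m' + 1 = card (Sp d (d*q)) \<and> (int (card (Sp d (d*q))) - 1) * int q + 1 \<le> r)"
  shows "\<exists>Y \<subseteq> Sp d (d*q). card Y = m' \<and> (\<forall>i<d. (\<Sum>y\<in>Y. \<bar>y i\<bar>) \<le> r)"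
proof -
  let ?S = "Sp d (d*q)"
  let ?x = "Pt d q (evv 0 - evv 1)"
  have xS: "?x \<in> ?S" and xb: "\<And>i. i < d \<Longrightarrow> int q - 1 \<le> \<bar>?x i\<bar> \<and> \<bar>?x i\<bar> \<le> int q + 1"
    using x0_props[OF d q] by auto
  consider "m' = 0" | "2 \<le> m' \<and> m' + 2 \<le> card ?S \<and> int m' * int q \<le> r" | "m' = 1 \<and> int q + 1 \<le> r"
    | "m' + 1 = card ?S \<and> (int (card ?S) - 1) * int q + 1 \<le> r" using c by blast
  thus ?thesis
  proof cases
    case 1 thus ?thesis using r by (intro exI[of _ "{}"]) auto
  next
    case 2
    then obtain Y where Y: "Y \<subseteq> ?S" "card Y = m'" "bal d q Y" using setupR(2)[OF d q] by blast
    thus ?thesis using 2 unfolding bal_def by auto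
  next
    case 3
    have "\<forall>i<d. (\<Sum>y\<in>{?x}. \<bar>y i\<bar>) \<le> r" using xb 3 by force
    thus ?thesis using xS 3 by (intro exI[of _ "{?x}"]) auto
  next
    case 4
    have fS: "finite ?S" by (rule Sp_finite)
    have bS: "bal d q ?S" by (rule setupR(3)[OF d q])
    have "(\<Sum>y\<in>?S - {?x}. \<bar>y i\<bar>) \<le> r" if i: "i < d" for i
    proof -
      have "(\<Sum>y\<in>?S. \<bar>y i\<bar>) = \<bar>?x i\<bar> + (\<Sum>y\<in>?S - {?x}. \<bar>y i\<bar>)" by (rule sum.remove[OF fS xS])
      moreover have "(\<Sum>y\<in>?S. \<bar>y i\<bar>) = int (card ?S) * int q" using bS i unfolding bal_def by blast
      moreover have "int q - 1 \<le> \<bar>?x i\<bar>" using xb[OF i] by blast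
      moreover have "(int (card ?S) - 1) * int q = int (card ?S) * int q - int q" by (simp add: algebra_simps)
      ultimately show ?thesis using 4 by linarith
    qed
    moreover have "card (?S - {?x}) = m'"
    proof -
      have "card (?S - {?x}) = card ?S - 1" using fS xS by simp
      thus ?thesis using 4 by linarith
    qed
    ultimately show ?thesis by (intro exI[of _ "?S - {?x}"]) auto
  qed
qed

lemma ball_finite: "finite (ball_prim d n)"
proof -
  have "ball_prim d n \<subseteq> {f. \<forall>x. (x \<in> {..<d} \<longrightarrow> f x \<in> {- int n..int n}) \<and> (x \<notin> {..<d} \<longrightarrow> f x = 0)}"
  proof
    fix x assume x: "x \<in> ball_prim d n"
    have "\<bar>x i\<bar> \<le> int n" if i: "i < d" for i
    proof -
      have "\<bar>x i\<bar> \<le> (\<Sum>j<d. \<bar>x j\<bar>)" using i by (intro member_le_sum) auto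
      thus ?thesis using x unfolding ball_prim_def l1norm_def by simp
    qed
    hence b: "x i \<in> {- int n..int n}" if "i < d" for i using that by (force simp: abs_le_iff)
    have "x i = 0" if "i \<ge> d" for i using x that unfolding ball_prim_def prim_pts_def by blast
    thus "x \<in> {f. \<forall>x. (x \<in> {..<d} \<longrightarrow> f x \<in> {- int n..int n}) \<and> (x \<notin> {..<d} \<longrightarrow> f x = 0)}"
      using b by auto
  qed
  moreover have "finite {f. \<forall>x. (x \<in> {..<d} \<longrightarrow> f x \<in> {- int n..int n}) \<and> (x \<notin> {..<d} \<longrightarrow> f x = (0::int))}"
    by (rule finite_set_of_finite_funs) auto
  ultimately show ?thesis by (rule finite_subset)
qed

lemma ball_split:
  assumes "n \<ge> 1"
  shows "ball_prim d n = ball_prim d (n - 1) \<union> Sp d n" "ball_prim d (n - 1) \<inter> Sp d n = {}"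
  using assms unfolding ball_prim_def Sp_def by auto

lemma kappa_growth:
  assumes d: "d \<ge> 2"
  shows "int k < kappa_p d (k + 2)"
proof -
  define x where "x = (\<lambda>i::nat. if i = 0 then 1 else if i = 1 then int (k + 1) else (0::int))"
  have g: "Gcd (x ` {..<d}) = 1"
  proof -
    have "x 0 \<in> x ` {..<d}" using d by simp
    hence "Gcd (x ` {..<d}) dvd 1" using Gcd_dvd by (metis x_def)
    thus ?thesis using Gcd_int_greater_eq_0 by (simp add: zdvd1_eq)
  qed
  have xp: "x \<in> prim_pts d" unfolding prim_pts_def using g d
    by (auto simp: x_def intro!: exI[of _ 0])
  have "l1norm d x = (\<Sum>i<d. \<bar>x i\<bar>)" by (simp add: l1norm_def)
  also have "\<dots> = (\<Sum>i\<in>{0,1}. \<bar>x i\<bar>)"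
    by (rule sum.mono_neutral_right) (use d in \<open>auto simp: x_def\<close>)
  also have "\<dots> = int (k + 2)" by (simp add: x_def)
  finally have xb: "x \<in> ball_prim d (k + 2)" using xp unfolding ball_prim_def by simp
  have "int (k + 1) = \<bar>x 1\<bar>" by (simp add: x_def)
  also have "\<dots> \<le> (\<Sum>y\<in>ball_prim d (k+2). \<bar>y 1\<bar>)"
    by (rule member_le_sum[OF xb _ ball_finite]) auto
  also have "\<dots> \<le> kappa_p d (k + 2)" unfolding kappa_p_def kappa_def
    using d by (intro Max_ge) auto
  finally show ?thesis by simp
qed



theorem lemma4p3:
  fixes d k p :: nat
  assumes "d > 2" and "k > 0"
    and "p = (LEAST q. 0 < q \<and> int k < kappa_p d q)"
    and "d dvd p"
  shows "(int k - kappa_p d (p - 1) \<noteq> int (p div d) \<and> kappa_p d p - int k \<noteq> int (p div d)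
           \<longrightarrow> (\<exists>X. X \<subseteq> prim_pts d \<and> finite X \<and> kappa d X \<le> int k \<and>
                    int (card X) = \<lfloor>lam d k p\<rfloor>))
       \<and> (\<not> (int k - kappa_p d (p - 1) \<noteq> int (p div d) \<and> kappa_p d p - int k \<noteq> int (p div d))
           \<longrightarrow> (\<exists>X. X \<subseteq> prim_pts d \<and> finite X \<and> kappa d X \<le> int k \<and>
                    int (card X) = \<lfloor>lam d k p\<rfloor> - 1))"
proof -
  have d3: "d \<ge> 3" and d0: "d > 0" using assms(1) by auto
  define P where "P = (\<lambda>q. 0 < q \<and> int k < kappa_p d q)"
  have Pex: "P (k + 2)" unfolding P_def using kappa_growth[of d k] d3 by simp
  have pL: "p = (LEAST q. P q)" using assms(3) unfolding P_def by simp
  have Pp: "P p" unfolding pL by (rule LeastI[of P, OF Pex])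
  have p0: "p > 0" and kp: "int k < kappa_p d p" using Pp unfolding P_def by auto
  obtain q where pq: "p = d * q" using assms(4) by blast
  have q1: "q \<ge> 1" using p0 pq by (cases q) auto
  have pdq: "p div d = q" using pq d0 by simp
  have p3: "p \<ge> 3" using pq q1 d3 by (metis le_trans mult.right_neutral mult_le_mono2)
  have "p - 1 < p" using p0 by simp
  hence "\<not> P (p - 1)" using not_less_Least[of "p - 1" P] pL by simp
  hence kp1: "kappa_p d (p - 1) \<le> int k" using p3 unfolding P_def by simp
  define K1 where "K1 = kappa_p d (p - 1)"
  define r where "r = int k - K1"
  define M where "M = card (Sp d p)"
  define N where "N = N_p d (p - 1)"
  define a where "a i = (\<Sum>y\<in>ball_prim d (p - 1). \<bar>y i\<bar>)" for i
  define B where "B = ball_prim d (p - 1)"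
  have fB: "finite B" unfolding B_def by (rule ball_finite)
  have fS: "finite (Sp d p)" by (rule Sp_finite)
  have split: "ball_prim d p = B \<union> Sp d p" "B \<inter> Sp d p = {}"
    using ball_split[of p d] p0 unfolding B_def by auto
  have balS: "bal d q (Sp d p)" using setupR(3)[OF d3 q1] pq by simp
  have K1def: "K1 = Max (a ` {..<d})" unfolding K1_def kappa_p_def kappa_def a_def by simp
  have aK: "a i \<le> K1" if "i < d" for i unfolding K1def using that by (intro Max_ge) auto
  have kpeq: "kappa_p d p = K1 + int M * int q"
  proof -
    have "kappa_p d p = Max ((\<lambda>i. a i + int M * int q) ` {..<d})"
      unfolding kappa_p_def kappa_def
    proof (rule arg_cong[where f=Max], rule image_cong[OF refl])
      fix i assume i: "i \<in> {..<d}"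
      have "(\<Sum>y\<in>ball_prim d p. \<bar>y i\<bar>) = (\<Sum>y\<in>B. \<bar>y i\<bar>) + (\<Sum>y\<in>Sp d p. \<bar>y i\<bar>)"
        unfolding split(1) by (rule sum.union_disjoint[OF fB fS split(2)])
      also have "(\<Sum>y\<in>Sp d p. \<bar>y i\<bar>) = int M * int q" using balS i unfolding bal_def M_def by simp
      finally show "(\<Sum>y\<in>ball_prim d p. \<bar>y i\<bar>) = a i + int M * int q" unfolding a_def B_def .
    qed
    also have "\<dots> = Max (a ` {..<d}) + int M * int q" by (rule Max_add_commute) (use d0 in auto)
    finally show ?thesis unfolding K1def .
  qed
  have r0: "0 \<le> r" unfolding r_def K1_def using kp1 by simp
  have rM: "r < int M * int q" unfolding r_def using kp kpeq by simp
  have Mge: "M \<ge> d + 3" unfolding M_def using setupR(1)[OF d3 q1] pq by simp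
  have lamfl: "\<lfloor>lam d k p\<rfloor> = int N + r div int q"
  proof -
    have "lam d k p = real N + real d * real_of_int r / real p"
      unfolding lam_def N_def r_def K1_def by simp
    also have "real d * real_of_int r / real p = real_of_int r / real_of_int (int q)"
      using pq d0 by simp
    finally have "lam d k p = real_of_int (int N) + real_of_int r / real_of_int (int q)" by simp
    hence "\<lfloor>lam d k p\<rfloor> = int N + \<lfloor>real_of_int r / real_of_int (int q)\<rfloor>"
      by (metis add.commute floor_add_int)
    moreover have "\<lfloor>real_of_int r / real_of_int (int q)\<rfloor> = r div int q"
      by (rule floor_divide_of_int_eq)
    ultimately show ?thesis by simp
  qed
  have buildX: "\<exists>X. X \<subseteq> prim_pts d \<and> finite X \<and> kappa d X \<le> int k \<and> int (card X) = int N + int m'"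
    if Y: "Y \<subseteq> Sp d p" "card Y = m'" "\<forall>i<d. (\<Sum>y\<in>Y. \<bar>y i\<bar>) \<le> r" for Y m'
  proof -
    have fY: "finite Y" using Y(1) fS finite_subset by blast
    have dj: "B \<inter> Y = {}" using split(2) Y(1) by blast
    let ?X = "B \<union> Y"
    have "?X \<subseteq> prim_pts d" using Y(1) unfolding B_def ball_prim_def Sp_def by blast
    moreover have "finite ?X" using fB fY by simp
    moreover have "kappa d ?X \<le> int k"
    proof -
      have all: "(\<Sum>x\<in>?X. \<bar>x i\<bar>) \<le> int k" if i: "i < d" for i
      proof -
        have "(\<Sum>x\<in>?X. \<bar>x i\<bar>) = a i + (\<Sum>y\<in>Y. \<bar>y i\<bar>)" unfolding a_def B_def[symmetric]
          by (rule sum.union_disjoint[OF fB fY dj])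
        thus ?thesis using aK[OF i] Y(3) i unfolding r_def by fastforce
      qed
      show ?thesis unfolding kappa_def by (subst Max_le_iff) (use d0 all in auto)
    qed
    moreover have "int (card ?X) = int N + int m'"
      using card_Un_disjoint[OF fB fY dj] Y(2) unfolding N_def N_p_def B_def by simp
    ultimately show ?thesis by blast
  qed
  have pdq': "int (p div d) = int q" using pdq by simp
  have ex: "\<exists>Y \<subseteq> Sp d p. card Y = m' \<and> (\<forall>i<d. (\<Sum>y\<in>Y. \<bar>y i\<bar>) \<le> r)"
    if "m' = 0 \<or> (2 \<le> m' \<and> m' + 2 \<le> M \<and> int m' * int q \<le> r)
            \<or> (m' = 1 \<and> int q + 1 \<le> r)
            \<or> (m' + 1 = M \<and> (int M - 1) * int q + 1 \<le> r)" for m'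
    using Y_ex[OF d3 q1 r0, of m'] that pq unfolding M_def by simp
  define m where "m = nat (r div int q)"
  have qpos: "0 < int q" using q1 by simp
  have "0 \<le> r div int q" using r0 qpos by (simp add: pos_imp_zdiv_nonneg_iff)
  hence mr: "int m = r div int q" unfolding m_def by simp
  have dm: "r div int q * int q + r mod int q = r" by (rule div_mult_mod_eq)
  have md: "0 \<le> r mod int q" "r mod int q < int q" using qpos by simp_all
  have mm1: "int m * int q = r div int q * int q" using mr by simp
  have mq: "int m * int q \<le> r" using mm1 dm md by linarith
  have "(int m + 1) * int q = int m * int q + int q" by (simp add: algebra_simps)
  hence mq2: "r < (int m + 1) * int q" using mm1 dm md by linarith
  have mM: "m < M"
  proof -
    have "int m * int q < int M * int q" using mq rM by linarith
    thus ?thesis using q1 by (simp add: mult_less_cancel_right)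
  qed
  show ?thesis
  proof (intro conjI impI)
    assume C: "int k - kappa_p d (p - 1) \<noteq> int (p div d) \<and> kappa_p d p - int k \<noteq> int (p div d)"
    have C1: "r \<noteq> int q" using C pdq' unfolding r_def K1_def by simp
    have C2: "r \<noteq> (int M - 1) * int q" using C pdq' kpeq unfolding r_def by (simp add: algebra_simps)
    have "m = 0 \<or> (2 \<le> m \<and> m + 2 \<le> M \<and> int m * int q \<le> r)
            \<or> (m = 1 \<and> int q + 1 \<le> r)
            \<or> (m + 1 = M \<and> (int M - 1) * int q + 1 \<le> r)"
    proof -
      consider "m = 0" | "m = 1" | "2 \<le> m \<and> m + 2 \<le> M" | "m + 1 = M" using mM by linarith
      thus ?thesis
      proof cases
        case 2 thus ?thesis using mq C1 by simp
      next
        case 4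
        hence "(int M - 1) * int q = int m * int q" by simp
        hence "(int M - 1) * int q + 1 \<le> r" using mq C2 by linarith
        thus ?thesis using 4 by blast
      qed (use mq in auto)
    qed
    from ex[OF this] obtain Y where Y: "Y \<subseteq> Sp d p" "card Y = m" "\<forall>i<d. (\<Sum>y\<in>Y. \<bar>y i\<bar>) \<le> r"
      by blast
    from buildX[OF Y] obtain X where "X \<subseteq> prim_pts d \<and> finite X \<and> kappa d X \<le> int k \<and> int (card X) = int N + int m"
      by blast
    thus "\<exists>X. X \<subseteq> prim_pts d \<and> finite X \<and> kappa d X \<le> int k \<and> int (card X) = \<lfloor>lam d k p\<rfloor>"
      using lamfl mr by auto
  next
    assume C: "\<not> (int k - kappa_p d (p - 1) \<noteq> int (p div d) \<and> kappa_p d p - int k \<noteq> int (p div d))"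
    have C': "r = int q \<or> r = (int M - 1) * int q"
    proof -
      have "int k - K1 = int q \<or> K1 + int M * int q - int k = int q" using C pdq' kpeq unfolding K1_def by auto
      thus ?thesis unfolding r_def by (auto simp: algebra_simps)
    qed
    have m1: "m \<ge> 1" and c2: "m - 1 = 0 \<or> (2 \<le> m - 1 \<and> m - 1 + 2 \<le> M \<and> int (m - 1) * int q \<le> r)"
    proof -
      have "m \<ge> 1 \<and> (m - 1 = 0 \<or> (2 \<le> m - 1 \<and> m - 1 + 2 \<le> M \<and> int (m - 1) * int q \<le> r))"
      proof (cases "r = int q")
        case True
        hence "r div int q = 1" using qpos by simp
        hence "m = 1" using mr by simp
        thus ?thesis by simp
      next
        case False
        hence rr: "r = (int M - 1) * int q" using C' by simp
        hence "r div int q = int M - 1" using qpos by simp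
        hence mm: "int m = int M - 1" using mr by simp
        hence h: "m - 1 + 2 \<le> M" "2 \<le> m - 1" "m \<ge> 1" using Mge d3 by linarith+
        have "int (m - 1) * int q \<le> int m * int q" using qpos by (intro mult_right_mono) auto
        hence "int (m - 1) * int q \<le> r" using mq by linarith
        thus ?thesis using h by blast
      qed
      thus "m \<ge> 1" "m - 1 = 0 \<or> (2 \<le> m - 1 \<and> m - 1 + 2 \<le> M \<and> int (m - 1) * int q \<le> r)" by blast+
    qed
    have "m - 1 = 0 \<or> (2 \<le> m - 1 \<and> m - 1 + 2 \<le> M \<and> int (m - 1) * int q \<le> r)
            \<or> (m - 1 = 1 \<and> int q + 1 \<le> r)
            \<or> (m - 1 + 1 = M \<and> (int M - 1) * int q + 1 \<le> r)" using c2 by blast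
    from ex[OF this] obtain Y where Y: "Y \<subseteq> Sp d p" "card Y = m - 1" "\<forall>i<d. (\<Sum>y\<in>Y. \<bar>y i\<bar>) \<le> r"
      by blast
    from buildX[OF Y] obtain X where X: "X \<subseteq> prim_pts d \<and> finite X \<and> kappa d X \<le> int k \<and> int (card X) = int N + int (m - 1)"
      by blast
    have "int (m - 1) = int m - 1" using m1 by simp
    thus "\<exists>X. X \<subseteq> prim_pts d \<and> finite X \<and> kappa d X \<le> int k \<and> int (card X) = \<lfloor>lam d k p\<rfloor> - 1"
      using X lamfl mr by auto
  qed
qed


end
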